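(* Let $q$ be a power of $2$, let $f\in\mathbb{F}_q[x]$ be monic of degree $m\ge1$, and let $h(x)=x^mf(x+x^{-1})$. Then $1$ is a root of $h$ if and only if $f(0)=0$, and in that case this root of $h$ has multiplicity two if and only if $0$ has multiplicity one as a root of $f$. All roots of $h$ different from $1$ are simple if and only if all roots of $f$ different from $0$ are simple. *)

theory Defs
  imports "HOL-Algebra.Algebraic_Closure_Type" "HOL-Computational_Algebra.Polynomial"
begin

text \<open>The polynomial h(x) = x^m f(x + 1/x), where m = degree f, written out:
  x^m (x + 1/x)^i = (x^2 + 1)^i x^(m - i) for i <= m.\<close>
definition sr_transform :: "'a :: comm_ring_1 poly \<Rightarrow> 'a poly" where
  "sr_transform f =
     (\<Sum>i\<le>degree f. smult (coeff f i) ([:1, 0, 1:] ^ i * monom 1 (degree f - i)))"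

end

theory Submission
  imports Defs
begin


lemma sr_poly:
  fixes p :: "'b :: field poly"
  assumes "x \<noteq> 0"
  shows "poly (sr_transform p) x = x ^ degree p * poly p (x + 1/x)"
proof -
  let ?d = "degree p"
  have "poly (sr_transform p) x = (\<Sum>i\<le>?d. coeff p i * ((1 + x*x) ^ i * x ^ (?d - i)))"
    by (simp add: sr_transform_def poly_sum poly_monom)
  also have "\<dots> = (\<Sum>i\<le>?d. x ^ ?d * (coeff p i * (x + 1/x) ^ i))"
  proof (rule sum.cong)
    fix i assume "i \<in> {..?d}"
    hence A: "x ^ ?d = x ^ (?d - i) * x ^ i" by (simp flip: power_add)
    have "x * (x + 1/x) = 1 + x*x" using assms by (simp add: field_simps)
    hence B: "x ^ i * (x + 1/x) ^ i = (1 + x*x) ^ i"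
      by (metis power_mult_distrib)
    show "coeff p i * ((1 + x*x) ^ i * x ^ (?d - i)) = x ^ ?d * (coeff p i * (x + 1/x) ^ i)"
      unfolding A B[symmetric] by (simp only: ac_simps)
  qed simp
  also have "\<dots> = x ^ ?d * poly p (x + 1/x)"
    by (simp add: poly_altdef sum_distrib_left)
  finally show ?thesis .
qed

lemma sr_poly0:
  fixes p :: "'b :: field poly"
  shows "poly (sr_transform p) 0 = lead_coeff p"
proof -
  let ?d = "degree p"
  have "poly (sr_transform p) 0 = (\<Sum>i\<le>?d. coeff p i * ((1 + 0*0) ^ i * (0::'b) ^ (?d - i)))"
    by (simp add: sr_transform_def poly_sum poly_monom)
  also have "\<dots> = (\<Sum>i\<in>{?d}. coeff p i * ((1 + 0*0) ^ i * (0::'b) ^ (?d - i)))"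
    by (rule sum.mono_neutral_right) auto
  finally show ?thesis by simp
qed

lemma alg_closed_infinite: "infinite (UNIV :: 'b :: alg_closed_field set)"
proof
  assume fin: "finite (UNIV :: 'b set)"
  define P where "P = (\<Prod>a\<in>(UNIV::'b set). [:-a, 1:]) + 1"
  have dP: "degree (\<Prod>a\<in>(UNIV::'b set). [:-a, 1:]) = card (UNIV :: 'b set)"
    by (subst degree_prod_sum_eq) auto
  have "card (UNIV :: 'b set) > 0" using fin by (simp add: card_gt_0_iff)
  hence "degree P > 0" unfolding P_def using dP
    by (subst degree_add_eq_left) auto
  then obtain x where "poly P x = 0" using alg_closed_imp_poly_has_root by blast
  moreover have "poly (\<Prod>a\<in>(UNIV::'b set). [:-a, 1:]) x = 0"
    using fin by (simp add: poly_prod)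
  ultimately show False by (simp add: P_def)
qed

lemma sr_mult:
  fixes p q :: "'b :: field poly"
  assumes inf: "infinite (UNIV :: 'b set)" and "p \<noteq> 0" "q \<noteq> 0"
  shows "sr_transform (p * q) = sr_transform p * sr_transform q"
proof -
  let ?D = "sr_transform (p * q) - sr_transform p * sr_transform q"
  have "UNIV - {0} \<subseteq> {x. poly ?D x = 0}"
    using assms by (auto simp: sr_poly degree_mult_eq power_add)
  moreover have "infinite (UNIV - {0::'b})" using inf by simp
  ultimately have "infinite {x. poly ?D x = 0}" using finite_subset by blast
  hence "?D = 0" using poly_roots_finite by blast
  thus ?thesis by simp
qed

lemma sr_ne0:
  fixes p :: "'b :: field poly"
  assumes "p \<noteq> 0" shows "sr_transform p \<noteq> 0"
  using sr_poly0[of p] assms by auto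

lemma sr_power:
  fixes p :: "'b :: field poly"
  assumes inf: "infinite (UNIV :: 'b set)" and "p \<noteq> 0"
  shows "sr_transform (p ^ n) = sr_transform p ^ n"
proof (induction n)
  case 0
  show ?case by (simp add: sr_transform_def)
next
  case (Suc n)
  then show ?case using assms by (simp add: sr_mult)
qed

lemma sr_lin:
  fixes a :: "'b :: field"
  shows "sr_transform [:-a, 1:] = [:1, -a, 1:]"
  by (simp add: sr_transform_def monom_altdef numeral_2_eq_2 power2_eq_square)


lemma coeff_mp: "coeff (map_poly to_ac p) n = to_ac (coeff p n)"
  by (simp add: coeff_map_poly)

lemma mp_add: "map_poly to_ac (p + q) = map_poly to_ac p + map_poly to_ac q"
  by (rule poly_eqI) (simp add: coeff_mp)

lemma mp_mult: "map_poly to_ac (p * q) = map_poly to_ac p * map_poly to_ac q"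
  by (rule poly_eqI) (simp add: coeff_mp coeff_mult to_ac_sum)

lemma mp_power: "map_poly to_ac (p ^ n) = map_poly to_ac p ^ n"
  by (induction n) (simp_all add: mp_mult)

lemma mp_sum: "map_poly to_ac (\<Sum>i\<in>A. f i) = (\<Sum>i\<in>A. map_poly to_ac (f i))"
  by (induction A rule: infinite_finite_induct) (simp_all add: mp_add)

lemma mp_smult: "map_poly to_ac (smult c p) = smult (to_ac c) (map_poly to_ac p)"
  by (rule map_poly_smult) simp_all

lemma mp_monom: "map_poly to_ac (monom c n) = monom (to_ac c) n"
  by (rule map_poly_monom) simp

lemma degree_mp: "degree (map_poly to_ac p) = degree p"
  by (rule degree_map_poly) simp

lemma mp_eq0: "map_poly to_ac p = 0 \<longleftrightarrow> p = 0"
  by (metis coeff_mp leading_coeff_0_iff degree_mp to_ac_eq_0_iff map_poly_0)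

lemma poly_mp: "poly (map_poly to_ac p) (to_ac x) = to_ac (poly p x)"
  by (induction p) (simp_all add: map_poly_pCons)

lemma mp_sr: "map_poly to_ac (sr_transform p) = sr_transform (map_poly to_ac p)"
  by (simp add: sr_transform_def mp_sum mp_smult mp_mult mp_power mp_monom degree_mp
      coeff_mp map_poly_pCons)

lemma mp_lin: "map_poly to_ac [:-a, 1:] = [:-to_ac a, 1:]"
  by (simp add: map_poly_pCons)

lemma order_mp:
  assumes "p \<noteq> 0"
  shows "order (to_ac a) (map_poly to_ac p) = order a p"
proof -
  obtain q where q: "p = [:-a, 1:] ^ order a p * q" "\<not> [:-a, 1:] dvd q"
    using order_decomp[OF assms] by blast
  have qa: "poly q a \<noteq> 0" using q(2) by (simp add: poly_eq_0_iff_dvd)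
  have "map_poly to_ac p = [:-to_ac a, 1:] ^ order a p * map_poly to_ac q"
    by (subst q(1)) (simp add: mp_mult mp_power mp_lin)
  moreover have "map_poly to_ac p \<noteq> 0" using assms by (simp add: mp_eq0)
  ultimately have "order (to_ac a) (map_poly to_ac p)
     = order (to_ac a) ([:-to_ac a, 1:] ^ order a p) + order (to_ac a) (map_poly to_ac q)"
    by (metis order_mult)
  also have "order (to_ac a) (map_poly to_ac q) = 0"
    by (rule order_0I) (simp add: poly_mp qa)
  finally show ?thesis by (simp add: order_power_n_n)
qed

lemma char2:
  assumes "\<exists>k. card (UNIV :: 'a :: {field, finite} set) = 2 ^ k"
  shows "(2 :: 'a) = 0"
proof -
  define G where "G = \<lparr> carrier = (UNIV :: 'a set), monoid.mult = (+), one = (0 :: 'a) \<rparr>"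
  interpret comm_group G
  proof (rule comm_groupI)
    fix x assume x: "x \<in> carrier G"
    show "\<exists>y\<in>carrier G. y \<otimes>\<^bsub>G\<^esub> x = \<one>\<^bsub>G\<^esub>"
      by (intro bexI[of _ "-x"]) (auto simp: G_def)
  qed (auto simp: G_def add_ac)
  have pw: "(1::'a) [^]\<^bsub>G\<^esub> n = of_nat n" for n
    by (induction n) (simp_all add: G_def)
  have "(1::'a) [^]\<^bsub>G\<^esub> card (carrier G) = \<one>\<^bsub>G\<^esub>"
    by (rule power_order_eq_one) (simp_all add: G_def)
  hence "of_nat (card (UNIV :: 'a set)) = (0::'a)" using pw[of "card (carrier G)"] by (simp add: G_def)
  hence dv: "CHAR('a) dvd card (UNIV :: 'a set)" by (simp add: of_nat_eq_0_iff_char_dvd)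
  have pr: "prime CHAR('a)"
    by (rule prime_CHAR_semidom) (simp add: finite_imp_CHAR_pos)
  obtain k where k: "card (UNIV :: 'a set) = 2 ^ k" using assms by blast
  have "CHAR('a) dvd 2" using dv k pr prime_dvd_power by metis
  hence "CHAR('a) \<le> 2" using dvd_imp_le by simp
  moreover have "CHAR('a) > 1" using prime_gt_1_nat[OF pr] .
  ultimately have "CHAR('a) = 2" by simp
  thus ?thesis by (metis of_nat_CHAR of_nat_numeral)
qed


lemma lin2: fixes a b :: "'c::comm_ring_1"
  shows "[:-a, 1:] * [:-b, 1:] = [:a*b, -(a+b), 1:]"
  by simp

lemma t1: fixes \<beta> :: "'c::field" assumes b0: "\<beta> \<noteq> 0"
  shows "[:1, -(\<beta> + 1/\<beta>), 1:] = [:-\<beta>, 1:] * [:-(1/\<beta>), 1:]"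
  unfolding lin2 using b0 by simp

lemma t2: assumes "(2::'c::field) = 0"
  shows "[:-1, 1:] ^ 2 = [:1, 0, 1::'c:]"
proof -
  have "-(1+1) = (0::'c)" using assms by simp
  thus ?thesis unfolding power2_eq_square lin2 by simp
qed

lemma key:
  fixes F :: "'c :: field poly" and \<beta> :: 'c
  assumes two: "(2::'c) = 0" and inf: "infinite (UNIV :: 'c set)"
    and F: "F \<noteq> 0" and b0: "\<beta> \<noteq> 0" and b1: "\<beta> \<noteq> 1"
  shows "order \<beta> (sr_transform F) = order (\<beta> + 1/\<beta>) F"
proof -
  define \<alpha> where "\<alpha> = \<beta> + 1/\<beta>"
  define e where "e = order \<alpha> F"
  obtain G where G: "F = [:-\<alpha>, 1:] ^ e * G" "\<not> [:-\<alpha>, 1:] dvd G"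
    using order_decomp[OF F] unfolding e_def by blast
  have Ga: "poly G \<alpha> \<noteq> 0" using G(2) by (simp add: poly_eq_0_iff_dvd)
  hence G0: "G \<noteq> 0" by auto
  have "sr_transform F = sr_transform ([:-\<alpha>, 1:] ^ e) * sr_transform G"
    by (subst G(1), rule sr_mult[OF inf]) (simp_all add: G0)
  also have "sr_transform ([:-\<alpha>, 1:] ^ e) = [:1, -\<alpha>, 1:] ^ e"
    by (simp add: sr_power[OF inf] sr_lin)
  also have "[:1, -\<alpha>, 1:] = [:-\<beta>, 1:] * [:-(1/\<beta>), 1:]"
    unfolding \<alpha>_def using b0 by (rule t1)
  finally have H: "sr_transform F = [:-\<beta>, 1:] ^ e * ([:-(1/\<beta>), 1:] ^ e * sr_transform G)"
    by (simp only: power_mult_distrib mult.assoc)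
  have m1: "(-1::'c) = 1" using two by (simp add: eq_neg_iff_add_eq_0)
  have "\<beta> - 1/\<beta> \<noteq> 0"
  proof
    assume "\<beta> - 1/\<beta> = 0"
    hence "\<beta> * \<beta> = 1" using b0 by (simp add: field_simps)
    hence "(\<beta> - 1) * (\<beta> + 1) = 0" by (simp add: algebra_simps)
    hence "\<beta> = 1 \<or> \<beta> = -1" by (auto simp: eq_neg_iff_add_eq_0)
    thus False using b1 m1 by auto
  qed
  define R where "R = [:-(1/\<beta>), 1:] ^ e * sr_transform G"
  have "poly R \<beta> = (\<beta> - 1/\<beta>) ^ e * (\<beta> ^ degree G * poly G \<alpha>)"
    using b0 by (simp add: R_def sr_poly \<alpha>_def)
  also have "\<dots> \<noteq> 0" using b0 Ga \<open>\<beta> - 1/\<beta> \<noteq> 0\<close> by simp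
  finally have R0: "poly R \<beta> \<noteq> 0" .
  have ne: "[:-\<beta>, 1:] ^ e * R \<noteq> 0" using sr_ne0[OF F] H by (simp add: R_def)
  have "order \<beta> (sr_transform F) = order \<beta> ([:-\<beta>, 1:] ^ e) + order \<beta> R"
    unfolding H R_def[symmetric] by (rule order_mult[OF ne])
  also have "\<dots> = e" using R0 by (simp add: order_power_n_n order_0I)
  finally show ?thesis by (simp add: e_def \<alpha>_def)
qed

lemma alpha_ne0:
  fixes \<beta> :: "'c :: field"
  assumes two: "(2::'c) = 0" and b0: "\<beta> \<noteq> 0" and b1: "\<beta> \<noteq> 1"
  shows "\<beta> + 1/\<beta> \<noteq> 0"
proof
  have m1: "(-1::'c) = 1" using two by (simp add: eq_neg_iff_add_eq_0)
  assume "\<beta> + 1/\<beta> = 0"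
  hence "\<beta> * \<beta> = -1" using b0 by (simp add: field_simps add_eq_0_iff)
  hence "\<beta> * \<beta> = 1" using m1 by simp
  hence "(\<beta> - 1) * (\<beta> + 1) = 0" by (simp add: algebra_simps)
  hence "\<beta> = 1 \<or> \<beta> = -1" by (auto simp: eq_neg_iff_add_eq_0)
  thus False using b1 m1 by auto
qed


theorem lemma2p12:
  fixes f :: "'a :: {field, finite} poly" and m :: nat
  assumes q_pow2: "\<exists>k. card (UNIV :: 'a set) = 2 ^ k"
    and monic: "lead_coeff f = 1"
    and deg: "degree f = m" and m_pos: "m \<ge> 1"
  defines "h \<equiv> sr_transform f"
  shows "(poly h 1 = 0 \<longleftrightarrow> poly f 0 = 0)
       \<and> (poly f 0 = 0 \<longrightarrow> (order 1 h = 2 \<longleftrightarrow> order 0 f = 1))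
       \<and> ((\<forall>\<beta> :: 'a alg_closure. \<beta> \<noteq> 1 \<and> poly (map_poly to_ac h) \<beta> = 0
              \<longrightarrow> order \<beta> (map_poly to_ac h) = 1)
          \<longleftrightarrow> (\<forall>\<alpha> :: 'a alg_closure. \<alpha> \<noteq> 0 \<and> poly (map_poly to_ac f) \<alpha> = 0
              \<longrightarrow> order \<alpha> (map_poly to_ac f) = 1))"
proof -
  define F where "F = map_poly to_ac f"
  define H where "H = map_poly to_ac h"
  have two: "(2::'a alg_closure) = 0" using char2[OF q_pow2] by (metis to_ac_numeral to_ac_0)
  have oneone: "(1::'a alg_closure) + 1 = 0" using two by simp
  have inf: "infinite (UNIV :: 'a alg_closure set)" by (rule alg_closed_infinite)
  have f0: "f \<noteq> 0" using monic by auto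
  have F0: "F \<noteq> 0" using f0 by (simp add: mp_eq0 F_def)
  have lcF: "lead_coeff F = 1" using monic by (simp add: degree_mp coeff_mp F_def)
  have Hdef: "H = sr_transform F" unfolding h_def H_def F_def by (rule mp_sr)
  have h0: "h \<noteq> 0" using sr_ne0[OF f0] h_def by simp
  have H0: "H \<noteq> 0" using sr_ne0[OF F0] Hdef by simp
  have degF: "degree F = m" using deg by (simp add: degree_mp F_def)
  have P1: "poly H 1 = poly F 0" using sr_poly[of 1 F] oneone by (simp add: Hdef)
  have eh: "poly H 1 = to_ac (poly h 1)" using poly_mp[of h 1] by (simp add: H_def)
  have ef: "poly F 0 = to_ac (poly f 0)" using poly_mp[of f 0] by (simp add: F_def)
  have part1: "poly h 1 = 0 \<longleftrightarrow> poly f 0 = 0" using P1 eh ef by simp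
  define k where "k = order 0 F"
  obtain G where G: "F = [:-0, 1:] ^ k * G" "\<not> [:-0, 1:] dvd G"
    using order_decomp[OF F0, of 0] unfolding k_def by blast
  have G0v: "poly G 0 \<noteq> 0" using G(2) by (simp add: poly_eq_0_iff_dvd)
  hence G0: "G \<noteq> 0" by auto
  have "H = sr_transform ([:-0, 1:] ^ k) * sr_transform G"
    unfolding Hdef by (subst G(1), rule sr_mult[OF inf]) (simp_all add: G0)
  also have "sr_transform ([:-0, 1:] ^ k :: 'a alg_closure poly) = sr_transform [:-0, 1:] ^ k"
    by (rule sr_power[OF inf]) simp
  also have "sr_transform [:-0, 1:] = ([:-1, 1:] ^ 2 :: 'a alg_closure poly)"
    using sr_lin[of 0] t2[OF two] by simp
  also have "([:-1, 1:] ^ 2) ^ k = ([:-1, 1:] ^ (2 * k) :: 'a alg_closure poly)"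
    by (rule power_mult[symmetric])
  finally have HG: "H = [:-1, 1:] ^ (2 * k) * sr_transform G" .
  have sG1: "poly (sr_transform G) 1 \<noteq> 0" using sr_poly[of 1 G] oneone G0v by simp
  have "order 1 H = order 1 ([:-1, 1:] ^ (2 * k) :: 'a alg_closure poly) + order 1 (sr_transform G)"
    using H0 unfolding HG by (rule order_mult)
  also have "\<dots> = 2 * k" using sG1 by (simp add: order_power_n_n order_0I)
  finally have oH: "order 1 H = 2 * k" .
  have oh: "order 1 h = order 1 H" using order_mp[OF h0, of 1] by (simp add: H_def)
  have of: "order 0 f = k" using order_mp[OF f0, of 0] by (simp add: F_def k_def)
  have part2: "order 1 h = 2 \<longleftrightarrow> order 0 f = 1" using oh oH of by auto
  have key': "order \<beta> H = order (\<beta> + 1/\<beta>) F" if "\<beta> \<noteq> 0" "\<beta> \<noteq> 1" for \<beta>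
    using key[OF two inf F0 that] Hdef by simp
  have Hat0: "poly H 0 = 1" using sr_poly0[of F] lcF Hdef by simp
  have part3: "(\<forall>\<beta>. \<beta> \<noteq> 1 \<and> poly H \<beta> = 0 \<longrightarrow> order \<beta> H = 1)
      \<longleftrightarrow> (\<forall>\<alpha>. \<alpha> \<noteq> 0 \<and> poly F \<alpha> = 0 \<longrightarrow> order \<alpha> F = 1)"
  proof
    assume L: "\<forall>\<beta>. \<beta> \<noteq> 1 \<and> poly H \<beta> = 0 \<longrightarrow> order \<beta> H = 1"
    show "\<forall>\<alpha>. \<alpha> \<noteq> 0 \<and> poly F \<alpha> = 0 \<longrightarrow> order \<alpha> F = 1"
    proof (intro allI impI)
      fix \<alpha> :: "'a alg_closure" assume a: "\<alpha> \<noteq> 0 \<and> poly F \<alpha> = 0"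
      have "degree [:1, -\<alpha>, 1:] > 0" by simp
      then obtain \<beta> where b: "poly [:1, -\<alpha>, 1:] \<beta> = 0"
        using alg_closed_imp_poly_has_root by blast
      hence b': "1 - \<alpha> * \<beta> + \<beta> * \<beta> = 0" by (simp add: algebra_simps)
      have b0: "\<beta> \<noteq> 0" using b' by auto
      have b1: "\<beta> \<noteq> 1"
      proof
        assume "\<beta> = 1"
        hence "(1 + 1) - \<alpha> = 0" using b' by (simp add: algebra_simps)
        thus False using a oneone by simp
      qed
      have ab: "\<alpha> = \<beta> + 1/\<beta>"
        using b' b0 by (simp add: field_simps)
      have "poly H \<beta> = 0" using sr_poly[OF b0, of F] a ab Hdef by simp
      hence "order \<beta> H = 1" using L b1 by blast
      thus "order \<alpha> F = 1" using key'[OF b0 b1] ab by simp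
    qed
  next
    assume R: "\<forall>\<alpha>. \<alpha> \<noteq> 0 \<and> poly F \<alpha> = 0 \<longrightarrow> order \<alpha> F = 1"
    show "\<forall>\<beta>. \<beta> \<noteq> 1 \<and> poly H \<beta> = 0 \<longrightarrow> order \<beta> H = 1"
    proof (intro allI impI)
      fix \<beta> :: "'a alg_closure" assume b: "\<beta> \<noteq> 1 \<and> poly H \<beta> = 0"
      have b0: "\<beta> \<noteq> 0" using b Hat0 by auto
      have a0: "\<beta> + 1/\<beta> \<noteq> 0" using alpha_ne0[OF two b0] b by simp
      have "order \<beta> H > 0" using b H0 by (simp add: order_gt_0_iff)
      hence "order (\<beta> + 1/\<beta>) F > 0" using key'[OF b0] b by simp
      hence "poly F (\<beta> + 1/\<beta>) = 0" using F0 by (simp add: order_gt_0_iff)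
      hence "order (\<beta> + 1/\<beta>) F = 1" using R a0 by blast
      thus "order \<beta> H = 1" using key'[OF b0] b by simp
    qed
  qed
  show ?thesis using part1 part2 part3 unfolding F_def H_def by blast
qed

end
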